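(* Let $r,d$ be positive integers with $n=(r+1)d\geq 3$. Then $\Delta_d^t\left(C_{(r+1)d}^r\right)\simeq\mathbb{S}^{r-1}$.
   Context: All graphs are finite and simple; $\alpha(G)$ is the independence number and $G[S]$ the induced subgraph on $S$. $\Delta_d^t(G)=\{\sigma\subseteq V(G):\ \alpha(G[V(G)\setminus\sigma])\geq d\}$. $C_n$ is the cycle on $\{1,\dots,n\}$ with edges $\{i,i+1\}$ and $\{1,n\}$; $C_n^r$ is the graph on the same vertices where distinct vertices are adjacent iff their distance in $C_n$ is at most $r$. *)

theory Defs
  imports "HOL-Analysis.Analysis"
begin

definition independent :: "('a \<Rightarrow> 'a \<Rightarrow> bool) \<Rightarrow> 'a set \<Rightarrow> bool" where
  "independent E I \<longleftrightarrow> (\<forall>x\<in>I. \<forall>y\<in>I. \<not> E x y)"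

definition indep_num :: "('a \<Rightarrow> 'a \<Rightarrow> bool) \<Rightarrow> 'a set \<Rightarrow> nat" where
  "indep_num E S = Max {card I | I. I \<subseteq> S \<and> independent E I}"

definition Delta_t :: "nat \<Rightarrow> 'a set \<Rightarrow> ('a \<Rightarrow> 'a \<Rightarrow> bool) \<Rightarrow> 'a set set" where
  "Delta_t d V E = {\<sigma>. \<sigma> \<subseteq> V \<and> indep_num E (V - \<sigma>) \<ge> d}"

definition cycdist :: "nat \<Rightarrow> nat \<Rightarrow> nat \<Rightarrow> nat" where
  "cycdist n i j = min (if i \<le> j then j - i else i - j) (n - (if i \<le> j then j - i else i - j))"

definition cycpow_edge :: "nat \<Rightarrow> nat \<Rightarrow> nat \<Rightarrow> nat \<Rightarrow> bool" where
  "cycpow_edge n r i j \<longleftrightarrow> i \<in> {1..n} \<and> j \<in> {1..n} \<and> i \<noteq> j \<and> cycdist n i j \<le> r"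

text \<open>Geometric realization of an abstract simplicial complex K on vertices of type 'a:
  points are finitely supported nonnegative weight functions summing to 1 whose
  support is a face of K, with the topology inherited from the product topology.\<close>
definition geom_real :: "'a set set \<Rightarrow> ('a \<Rightarrow> real) set" where
  "geom_real K = {f. (\<forall>i. 0 \<le> f i) \<and> {i. f i \<noteq> 0} \<in> K \<and> finite {i. f i \<noteq> 0}
                     \<and> sum f {i. f i \<noteq> 0} = 1}"

definition geom_real_top :: "'a set set \<Rightarrow> ('a \<Rightarrow> real) topology" where
  "geom_real_top K = subtopology (powertop_real UNIV) (geom_real K)"

end

theory Submission
  imports Defs
begin


definition Acl :: "nat \<Rightarrow> nat \<Rightarrow> nat \<Rightarrow> nat set" where
  "Acl r d j = {v \<in> {1..(r+1)*d}. (v-1) mod (r+1) = j}"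

lemma Acl_eq:
  assumes "j \<le> r"
  shows "Acl r d j = (\<lambda>k. k*(r+1)+1+j) ` {..<d}"
proof
  show "Acl r d j \<subseteq> (\<lambda>k. k*(r+1)+1+j) ` {..<d}"
  proof
    fix v assume v: "v \<in> Acl r d j"
    then have v1: "1 \<le> v" "v \<le> (r+1)*d" and vm: "(v-1) mod (r+1) = j" by (auto simp: Acl_def)
    define k where "k = (v-1) div (r+1)"
    have "v - 1 = k*(r+1) + j" using vm k_def by (metis div_mult_mod_eq)
    then have ve: "v = k*(r+1)+1+j" using v1 by linarith
    have "k < d"
    proof (rule ccontr)
      assume "\<not> k < d" then have "d \<le> k" by simp
      then have "d*(r+1) \<le> k*(r+1)" by (rule mult_le_mono1)
      then show False using ve v1 by (simp add: algebra_simps)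
    qed
    then show "v \<in> (\<lambda>k. k*(r+1)+1+j) ` {..<d}" using ve by auto
  qed
next
  show "(\<lambda>k. k*(r+1)+1+j) ` {..<d} \<subseteq> Acl r d j"
  proof
    fix v assume "v \<in> (\<lambda>k. k*(r+1)+1+j) ` {..<d}"
    then obtain k where k: "k < d" "v = k*(r+1)+1+j" by auto
    have "Suc k \<le> d" using k by simp
    then have "Suc k * (r+1) \<le> d*(r+1)" by (rule mult_le_mono1)
    then have "v \<le> (r+1)*d" using k assms by (simp add: algebra_simps)
    moreover have "v - 1 = j + k*(r+1)" using k by simp
    then have "(v-1) mod (r+1) = j" using assms by (simp only: mod_mult_self1 mod_less le_imp_less_Suc Suc_eq_plus1)
    ultimately show "v \<in> Acl r d j" by (auto simp: Acl_def k)
  qed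
qed

lemma card_Acl:
  assumes "j \<le> r"
  shows "card (Acl r d j) = d"
proof -
  have "inj_on (\<lambda>k. k*(r+1)+1+j) {..<d}"
  proof (rule inj_onI)
    fix x y assume "x*(r+1)+1+j = y*(r+1)+1+j"
    then have "x*(r+1) = y*(r+1)" by linarith
    then show "x = y" by (metis mult_cancel2 add_is_0 one_neq_zero)
  qed
  then show ?thesis using Acl_eq[OF assms] by (simp add: card_image)
qed

lemma cycdist_lt:
  assumes "u < v" shows "cycdist n u v = min (v-u) (n-(v-u))" "cycdist n v u = min (v-u) (n-(v-u))"
  using assms by (auto simp: cycdist_def)

lemma Acl_indep:
  assumes "j \<le> r"
  shows "independent (cycpow_edge ((r+1)*d) r) (Acl r d j)"
proof -
  have *: "\<not> cycpow_edge ((r+1)*d) r u v" if u: "u \<in> Acl r d j" and v: "v \<in> Acl r d j" and uv: "u < v" for u v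
  proof -
    obtain k1 where k1: "k1 < d" "u = k1*(r+1)+1+j" using u Acl_eq[OF assms] by auto
    obtain k2 where k2: "k2 < d" "v = k2*(r+1)+1+j" using v Acl_eq[OF assms] by auto
    have "k1 < k2" using uv k1 k2 by (metis add_less_cancel_right mult_less_cancel2)
    define m where "m = k2 - k1"
    have m: "k2 = k1 + m" "m \<ge> 1" using \<open>k1 < k2\<close> m_def by auto
    have vu: "v - u = m*(r+1)" using k1 k2 m by (simp add: algebra_simps)
    have "k1 + m + 1 \<le> d" using k2 m by simp
    then obtain q where q: "d = k1 + m + 1 + q" using le_Suc_ex by blast
    have "(r+1)*d - (v-u) = (k1+1+q)*(r+1)" using vu q by (simp add: algebra_simps)
    moreover have "(k1+1+q)*(r+1) \<ge> r+1" by simp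
    moreover have "m*(r+1) \<ge> r+1" using mult_le_mono1[OF m(2), of "r+1"] by simp
    ultimately have "cycdist ((r+1)*d) u v > r" using cycdist_lt(1)[OF uv] vu by simp
    then show ?thesis by (auto simp: cycpow_edge_def)
  qed
  show ?thesis unfolding independent_def
  proof (intro ballI)
    fix x y assume "x \<in> Acl r d j" "y \<in> Acl r d j"
    then show "\<not> cycpow_edge ((r+1)*d) r x y"
      using *[of x y] *[of y x] cycdist_lt[of x y] cycdist_lt[of y x]
      by (cases x y rule: linorder_cases) (auto simp: cycpow_edge_def)
  qed
qed

lemma key_indep:
  fixes r d :: nat
  assumes d1: "d \<ge> 1" and IV: "I \<subseteq> {1..(r+1)*d}"
    and ind: "independent (cycpow_edge ((r+1)*d) r) I" and cI: "card I \<ge> d"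
  shows "\<exists>j\<le>r. Acl r d j \<subseteq> I"
proof -
  define n where "n = (r+1)*d"
  define B where "B k = {k*(r+1)+1 .. k*(r+1)+r+1}" for k
  have noedge: "v - u > r \<and> n - (v-u) > r" if "u \<in> I" "v \<in> I" "u < v" for u v
  proof -
    have "\<not> cycpow_edge n r u v" using ind that by (auto simp: independent_def n_def)
    then have "\<not> cycdist n u v \<le> r" using that IV by (auto simp: cycpow_edge_def n_def)
    then show ?thesis using cycdist_lt(1)[OF that(3), of n] by (metis min_less_iff_conj not_le)
  qed
  have fin: "finite I" using IV finite_subset by blast
  have cov: "I \<subseteq> (\<Union>k\<in>{..<d}. I \<inter> B k)"
  proof
    fix v assume v: "v \<in> I"
    then have v1: "1 \<le> v" "v \<le> (r+1)*d" using IV by auto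
    define k where "k = (v-1) div (r+1)"
    have e: "v - 1 = k*(r+1) + (v-1) mod (r+1)" using k_def by (metis div_mult_mod_eq)
    have "(v-1) mod (r+1) < r+1" by simp
    have "v - 1 < d*(r+1)" using v1 by (simp add: algebra_simps)
    then have "k < d" unfolding k_def by (rule less_mult_imp_div_less)
    moreover have "k*(r+1)+1 \<le> v \<and> v \<le> k*(r+1)+r+1" using e v1 \<open>(v-1) mod (r+1) < r+1\<close> by linarith
    then have "v \<in> B k" unfolding B_def by simp
    ultimately show "v \<in> (\<Union>k\<in>{..<d}. I \<inter> B k)" using v by auto
  qed
  have le1: "card (I \<inter> B k) \<le> 1" for k
  proof -
    have "\<forall>a\<in>I \<inter> B k. \<forall>b\<in>I \<inter> B k. a = b"
    proof (intro ballI)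
      fix a b assume a: "a \<in> I \<inter> B k" and b: "b \<in> I \<inter> B k"
      show "a = b"
      proof (rule ccontr)
        assume "a \<noteq> b"
        then consider "a < b" | "b < a" by linarith
        then show False
        proof cases
          case 1 then show False using noedge[of a b] a b by (auto simp: B_def)
        next
          case 2 then show False using noedge[of b a] a b by (auto simp: B_def)
        qed
      qed
    qed
    then show ?thesis using card_le_Suc0_iff_eq[of "I \<inter> B k"] fin by auto
  qed
  have sumge: "d \<le> (\<Sum>k\<in>{..<d}. card (I \<inter> B k))"
  proof -
    have "card I \<le> card (\<Union>k\<in>{..<d}. I \<inter> B k)"
      using cov by (intro card_mono) (auto simp: fin)
    also have "\<dots> \<le> (\<Sum>k\<in>{..<d}. card (I \<inter> B k))" by (rule card_UN_le) simp
    finally show ?thesis using cI by simp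
  qed
  have ne: "I \<inter> B k \<noteq> {}" if k: "k < d" for k
  proof
    assume em: "I \<inter> B k = {}"
    have "(\<Sum>k\<in>{..<d}. card (I \<inter> B k)) = card (I \<inter> B k) + (\<Sum>k\<in>{..<d}-{k}. card (I \<inter> B k))"
      using k by (subst sum.remove[of _ k]) auto
    also have "\<dots> = (\<Sum>k\<in>{..<d}-{k}. card (I \<inter> B k))" using em by simp
    also have "\<dots> \<le> card ({..<d}-{k}) * 1" using sum_bounded_above[of "{..<d}-{k}" "\<lambda>k. card (I \<inter> B k)" 1] le1 by simp
    also have "\<dots> = d - 1" using k by simp
    finally show False using sumge d1 by simp
  qed
  define e where "e k = (SOME v. v \<in> I \<inter> B k)" for k
  have eB: "e k \<in> I \<and> k*(r+1)+1 \<le> e k \<and> e k \<le> k*(r+1)+r+1" if "k < d" for k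
  proof -
    have "e k \<in> I \<inter> B k" unfolding e_def using ne[OF that] by (metis ex_in_conv someI_ex)
    then show ?thesis by (auto simp: B_def)
  qed
  define p where "p k = e k - (k*(r+1)+1)" for k
  have pe: "e k = k*(r+1)+1+p k" "p k \<le> r" if "k < d" for k
    using eB[OF that] unfolding p_def by auto
  have step: "p k \<le> p (Suc k)" if "Suc k < d" for k
  proof -
    have k: "k < d" using that by simp
    have a: "Suc k * (r+1) = k*(r+1) + r + 1" by simp
    have lt: "e k < e (Suc k)" using pe[OF k] pe[OF that] a by linarith
    have "e (Suc k) - e k > r" using noedge[OF _ _ lt] eB[OF k] eB[OF that] by blast
    then show ?thesis using pe[OF k] pe[OF that] a by linarith
  qed
  have mono: "p i \<le> p j" if "i \<le> j" "j < d" for i j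
    using that
  proof (induction j)
    case 0 then show ?case by simp
  next
    case (Suc j)
    show ?case
    proof (cases "i = Suc j")
      case True then show ?thesis by simp
    next
      case False
      then have "i \<le> j" using Suc.prems by simp
      then have "p i \<le> p j" using Suc by simp
      then show ?thesis using step[of j] Suc.prems by simp
    qed
  qed
  have wrap: "p (d-1) \<le> p 0"
  proof (cases "d = 1")
    case True then show ?thesis by simp
  next
    case False
    then have d2: "d \<ge> 2" "d - 1 < d" "0 < d" using d1 by auto
    have a: "(d-1)*(r+1) + r + 1 = n" unfolding n_def using d1
      by (cases d) (auto simp: algebra_simps)
    have e0: "e 0 = 1 + p 0" using pe(1)[OF d2(3)] by simp
    have ed: "e (d-1) = (d-1)*(r+1) + 1 + p (d-1)" using pe(1)[OF d2(2)] .
    have A: "r+1 \<le> (d-1)*(r+1)" using mult_le_mono1[of 1 "d-1" "r+1"] d2 by simp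
    have lt: "e 0 < e (d-1)" using e0 ed A pe(2)[OF d2(3)] by linarith
    have "n - (e (d-1) - e 0) > r" using noedge[OF _ _ lt] eB[OF d2(2)] eB[OF d2(3)] by blast
    then show ?thesis using e0 ed a by linarith
  qed
  have peq: "p k = p 0" if "k < d" for k
  proof -
    have "k \<le> d - 1" using that by simp
    then show ?thesis using mono[of 0 k] mono[of k "d-1"] wrap that by simp
  qed
  have "Acl r d (p 0) \<subseteq> I"
  proof
    fix v assume "v \<in> Acl r d (p 0)"
    then obtain k where k: "k < d" "v = k*(r+1)+1+p 0" using Acl_eq[OF pe(2)[of 0]] d1 by auto
    then have "v = e k" using pe[OF k(1)] peq[OF k(1)] by simp
    then show "v \<in> I" using eB[OF k(1)] by simp
  qed
  then show ?thesis using pe(2)[of 0] d1 by auto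
qed

lemma mem_Delta:
  fixes r d :: nat
  assumes d1: "d \<ge> 1"
  shows "\<sigma> \<in> Delta_t d {1..(r+1)*d} (cycpow_edge ((r+1)*d) r) \<longleftrightarrow>
         \<sigma> \<subseteq> {1..(r+1)*d} \<and> (\<exists>j\<le>r. \<sigma> \<inter> Acl r d j = {})"
proof -
  define V where "V = {1..(r+1)*d}"
  define E where "E = cycpow_edge ((r+1)*d) r"
  define C where "C = {card I | I. I \<subseteq> V - \<sigma> \<and> independent E I}"
  have finC: "finite C" unfolding C_def
    by (rule finite_subset[of _ "card ` Pow (V - \<sigma>)"]) (auto simp: V_def)
  have "card ({}::nat set) \<in> C" unfolding C_def independent_def by blast
  then have neC: "C \<noteq> {}" by auto
  have "\<sigma> \<in> Delta_t d V E \<longleftrightarrow> \<sigma> \<subseteq> V \<and> d \<le> Max C"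
    by (simp add: Delta_t_def indep_num_def C_def)
  also have "\<dots> \<longleftrightarrow> \<sigma> \<subseteq> V \<and> (\<exists>j\<le>r. \<sigma> \<inter> Acl r d j = {})"
  proof (intro iffI conjI)
    assume h: "\<sigma> \<subseteq> V \<and> d \<le> Max C"
    then show "\<sigma> \<subseteq> V" by simp
    have "Max C \<in> C" using finC neC by (rule Max_in)
    then obtain I where I: "Max C = card I" "I \<subseteq> V - \<sigma>" "independent E I" unfolding C_def by auto
    then obtain j where j: "j \<le> r" "Acl r d j \<subseteq> I"
      using key_indep[of d I r] d1 h by (auto simp: V_def E_def)
    then show "\<exists>j\<le>r. \<sigma> \<inter> Acl r d j = {}" using I by blast
  next
    assume h: "\<sigma> \<subseteq> V \<and> (\<exists>j\<le>r. \<sigma> \<inter> Acl r d j = {})"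
    then show "\<sigma> \<subseteq> V" by simp
    obtain j where j: "j \<le> r" "\<sigma> \<inter> Acl r d j = {}" using h by blast
    have "Acl r d j \<subseteq> V - \<sigma>" using j by (auto simp: Acl_def V_def)
    then have "card (Acl r d j) \<in> C" unfolding C_def E_def using Acl_indep[OF j(1)] by blast
    then show "d \<le> Max C" using card_Acl[OF j(1)] finC by (metis Max_ge)
  qed
  finally show ?thesis by (simp add: V_def E_def)
qed

lemma mem_geom:
  fixes r d :: nat
  assumes d1: "d \<ge> 1"
  shows "f \<in> geom_real (Delta_t d {1..(r+1)*d} (cycpow_edge ((r+1)*d) r)) \<longleftrightarrow>
         (\<forall>i. 0 \<le> f i) \<and> (\<forall>i. i \<notin> {1..(r+1)*d} \<longrightarrow> f i = 0) \<and> sum f {1..(r+1)*d} = 1 \<and>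
         (\<exists>j\<le>r. \<forall>v\<in>Acl r d j. f v = 0)"
proof -
  define V where "V = {1..(r+1)*d}"
  define S where "S = {i. f i \<noteq> 0}"
  have sumeq: "sum f V = sum f S" if "S \<subseteq> V"
    using that by (intro sum.mono_neutral_right) (auto simp: V_def S_def)
  have L: "(\<forall>i. 0 \<le> f i) \<and> (S \<subseteq> V \<and> (\<exists>j\<le>r. S \<inter> Acl r d j = {})) \<and> finite S \<and> sum f S = 1
     \<longleftrightarrow> (\<forall>i. 0 \<le> f i) \<and> (\<forall>i. i \<notin> V \<longrightarrow> f i = 0) \<and> sum f V = 1 \<and> (\<exists>j\<le>r. \<forall>v\<in>Acl r d j. f v = 0)"
  proof
    assume h: "(\<forall>i. 0 \<le> f i) \<and> (S \<subseteq> V \<and> (\<exists>j\<le>r. S \<inter> Acl r d j = {})) \<and> finite S \<and> sum f S = 1"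
    then obtain j where "j \<le> r" "S \<inter> Acl r d j = {}" by blast
    then show "(\<forall>i. 0 \<le> f i) \<and> (\<forall>i. i \<notin> V \<longrightarrow> f i = 0) \<and> sum f V = 1 \<and> (\<exists>j\<le>r. \<forall>v\<in>Acl r d j. f v = 0)"
      using h sumeq by (auto simp: S_def)
  next
    assume h: "(\<forall>i. 0 \<le> f i) \<and> (\<forall>i. i \<notin> V \<longrightarrow> f i = 0) \<and> sum f V = 1 \<and> (\<exists>j\<le>r. \<forall>v\<in>Acl r d j. f v = 0)"
    then obtain j where j: "j \<le> r" "\<forall>v\<in>Acl r d j. f v = 0" by blast
    have SV: "S \<subseteq> V" using h by (auto simp: S_def)
    moreover have "finite S" using SV finite_subset V_def by blast
    moreover have "S \<inter> Acl r d j = {}" using j by (auto simp: S_def)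
    ultimately show "(\<forall>i. 0 \<le> f i) \<and> (S \<subseteq> V \<and> (\<exists>j\<le>r. S \<inter> Acl r d j = {})) \<and> finite S \<and> sum f S = 1"
      using h sumeq j(1) by auto
  qed
  show ?thesis
  proof -
    have D: "S \<in> Delta_t d V (cycpow_edge ((r+1)*d) r) \<longleftrightarrow> S \<subseteq> V \<and> (\<exists>j\<le>r. S \<inter> Acl r d j = {})"
      using mem_Delta[OF d1, of S r] by (simp add: V_def)
    show ?thesis
      unfolding geom_real_def mem_Collect_eq S_def[symmetric] V_def[symmetric] D using L by blast
  qed
qed




definition Bset :: "nat \<Rightarrow> (nat \<Rightarrow> real) set" where
  "Bset r = {x. (\<forall>i. 0 \<le> x i) \<and> (\<forall>i>r. x i = 0) \<and> sum x {..r} = 1 \<and> (\<exists>j\<le>r. x j = 0)}"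

definition sm :: "nat \<Rightarrow> nat \<Rightarrow> (nat \<Rightarrow> real) \<Rightarrow> nat \<Rightarrow> real" where
  "sm r d f = (\<lambda>j. if j \<le> r then sum f (Acl r d j) else 0)"

definition gm :: "nat \<Rightarrow> nat \<Rightarrow> (nat \<Rightarrow> real) \<Rightarrow> nat \<Rightarrow> real" where
  "gm r d x = (\<lambda>v. if v \<in> {1..(r+1)*d} then x ((v-1) mod (r+1)) / real d else 0)"

lemma sum_split_Acl:
  "sum h {1..(r+1)*d} = (\<Sum>j\<le>r. sum h (Acl r d j))"
proof -
  have "(\<Sum>j\<le>r. sum h {v\<in>{1..(r+1)*d}. (v-1) mod (r+1) = j}) = sum h {1..(r+1)*d}"
    by (rule sum.group) (auto simp: less_Suc_eq_le[symmetric])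
  then show ?thesis by (simp add: Acl_def)
qed

lemma Acl_sub: "Acl r d j \<subseteq> {1..(r+1)*d}" by (auto simp: Acl_def)

lemma finite_Acl[simp]: "finite (Acl r d j)" by (auto simp: Acl_def)

lemma Acl_cls: "v \<in> Acl r d j \<Longrightarrow> (v-1) mod (r+1) = j" by (auto simp: Acl_def)

lemma sm_in:
  assumes d1: "d \<ge> 1" and f: "f \<in> geom_real (Delta_t d {1..(r+1)*d} (cycpow_edge ((r+1)*d) r))"
  shows "sm r d f \<in> Bset r"
proof -
  have h: "\<forall>i. 0 \<le> f i" "sum f {1..(r+1)*d} = 1" "\<exists>j\<le>r. \<forall>v\<in>Acl r d j. f v = 0"
    using f mem_geom[OF d1] by auto
  then obtain j where j: "j \<le> r" "\<forall>v\<in>Acl r d j. f v = 0" by blast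
  have "(\<Sum>i\<le>r. sm r d f i) = (\<Sum>i\<le>r. sum f (Acl r d i))" by (simp add: sm_def)
  also have "\<dots> = 1" using h(2) sum_split_Acl[of f r d] by simp
  finally have "sum (sm r d f) {..r} = 1" .
  moreover have "sm r d f j = 0" using j by (simp add: sm_def)
  moreover have "\<forall>i. 0 \<le> sm r d f i" using h(1) by (auto simp: sm_def intro!: sum_nonneg)
  moreover have "\<forall>i>r. sm r d f i = 0" by (simp add: sm_def)
  ultimately show ?thesis using j(1) unfolding Bset_def by blast
qed

lemma gm_in:
  assumes d1: "d \<ge> 1" and x: "x \<in> Bset r"
  shows "gm r d x \<in> geom_real (Delta_t d {1..(r+1)*d} (cycpow_edge ((r+1)*d) r))"
proof -
  have x0: "\<forall>i. 0 \<le> x i" "sum x {..r} = 1" and "\<exists>j\<le>r. x j = 0" using x by (auto simp: Bset_def)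
  then obtain j where j: "j \<le> r" "x j = 0" by blast
  have "sum (gm r d x) {1..(r+1)*d} = (\<Sum>i\<le>r. sum (gm r d x) (Acl r d i))" by (rule sum_split_Acl)
  also have "\<dots> = (\<Sum>i\<le>r. x i)"
  proof (rule sum.cong)
    fix i assume "i \<in> {..r}"
    then have "sum (gm r d x) (Acl r d i) = sum (\<lambda>v. x i / real d) (Acl r d i)"
      by (intro sum.cong) (auto simp: gm_def Acl_def)
    also have "\<dots> = x i" using card_Acl[of i r d] \<open>i \<in> {..r}\<close> d1 by simp
    finally show "sum (gm r d x) (Acl r d i) = x i" .
  qed simp
  finally have s1: "sum (gm r d x) {1..(r+1)*d} = 1" using x0 by simp
  have "\<forall>v\<in>Acl r d j. gm r d x v = 0" using j by (auto simp: gm_def Acl_def)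
  moreover have "\<forall>i. 0 \<le> gm r d x i" using x0 by (auto simp: gm_def)
  moreover have "\<forall>i. i \<notin> {1..(r+1)*d} \<longrightarrow> gm r d x i = 0" by (simp add: gm_def)
  ultimately show ?thesis unfolding mem_geom[OF d1] using s1 j by blast
qed

lemma sm_gm:
  assumes d1: "d \<ge> 1" and x: "x \<in> Bset r"
  shows "sm r d (gm r d x) = x"
proof
  fix i show "sm r d (gm r d x) i = x i"
  proof (cases "i \<le> r")
    case True
    then have "sum (gm r d x) (Acl r d i) = sum (\<lambda>v. x i / real d) (Acl r d i)"
      by (intro sum.cong) (auto simp: gm_def Acl_def)
    also have "\<dots> = x i" using card_Acl[of i r d] True d1 by simp
    finally show ?thesis using True by (simp add: sm_def)
  next
    case False then show ?thesis using x by (simp add: sm_def Bset_def)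
  qed
qed

lemma cont_proj_sub: "continuous_map (subtopology (powertop_real UNIV) S) euclideanreal (\<lambda>f. f v)"
  by (rule continuous_map_from_subtopology) (metis continuous_map_product_projection UNIV_I)

lemma cont_sm: "continuous_map (subtopology (powertop_real UNIV) S) (powertop_real UNIV) (sm r d)"
  unfolding continuous_map_componentwise_UNIV
proof
  fix k
  show "continuous_map (subtopology (powertop_real UNIV) S) euclideanreal (\<lambda>x. sm r d x k)"
  proof (cases "k \<le> r")
    case True
    then show ?thesis unfolding sm_def
      by (simp, intro continuous_map_sum cont_proj_sub finite_Acl)
  next
    case False then show ?thesis by (simp add: sm_def)
  qed
qed

lemma cont_gm: "continuous_map (subtopology (powertop_real UNIV) S) (powertop_real UNIV) (gm r d)"
  unfolding continuous_map_componentwise_UNIV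
proof
  fix k
  show "continuous_map (subtopology (powertop_real UNIV) S) euclideanreal (\<lambda>x. gm r d x k)"
  proof (cases "k \<in> {1..(r+1)*d}")
    case True
    then have "d > 0" by (cases d) auto
    have eq: "(\<lambda>x. gm r d x k) = (\<lambda>x. x ((k-1) mod (r+1)) / real d)" using True by (auto simp: gm_def)
    show ?thesis unfolding eq
      by (rule continuous_map_real_divide) (auto simp: cont_proj_sub \<open>d > 0\<close>)
  next
    case False
    then have eq: "(\<lambda>x. gm r d x k) = (\<lambda>x. 0)" by (auto simp: gm_def)
    show ?thesis unfolding eq by simp
  qed
qed

lemma X_B:
  assumes d1: "d \<ge> 1"
  shows "geom_real_top (Delta_t d {1..(r+1)*d} (cycpow_edge ((r+1)*d) r))
           homotopy_equivalent_space subtopology (powertop_real UNIV) (Bset r)"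
proof -
  define K where "K = Delta_t d {1..(r+1)*d} (cycpow_edge ((r+1)*d) r)"
  define X where "X = geom_real_top K"
  define Y where "Y = subtopology (powertop_real UNIV) (Bset r)"
  have tX: "topspace X = geom_real K" by (simp add: X_def geom_real_top_def)
  have tY: "topspace Y = Bset r" by (simp add: Y_def)
  have c1: "continuous_map X Y (sm r d)"
    unfolding Y_def continuous_map_in_subtopology
    using cont_sm[of "geom_real K" r d] sm_in[OF d1] tX by (auto simp: X_def geom_real_top_def K_def)
  have c2: "continuous_map Y X (gm r d)"
    unfolding X_def geom_real_top_def continuous_map_in_subtopology
    using cont_gm[of "Bset r" r d] gm_in[OF d1] tY by (auto simp: Y_def K_def)
  have h2: "homotopic_with (\<lambda>x. True) Y Y (sm r d \<circ> gm r d) id"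
    by (rule homotopic_with_equal) (auto simp: tY sm_gm[OF d1] intro: continuous_map_compose c1 c2)
  define H where "H = (\<lambda>p::real \<times> (nat \<Rightarrow> real). \<lambda>v. fst p * snd p v + (1 - fst p) * gm r d (sm r d (snd p)) v)"
  have h1: "homotopic_with (\<lambda>x. True) X X (gm r d \<circ> sm r d) id"
    unfolding homotopic_with_def
  proof (intro exI conjI allI ballI)
    show "H (0, x) = (gm r d \<circ> sm r d) x" for x by (simp add: H_def)
    show "H (1, x) = id x" for x by (simp add: H_def)
    show "True" by simp
    have cgs: "continuous_map X (powertop_real UNIV) (gm r d \<circ> sm r d)"
      using continuous_map_compose[OF c1 c2] unfolding X_def geom_real_top_def
      by (rule continuous_map_into_fulltopology)
    have cfst: "continuous_map (prod_topology (top_of_set {0..1}) X) euclideanreal fst"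
      by (rule continuous_map_into_fulltopology[OF continuous_map_fst])
    have csnd: "continuous_map (prod_topology (top_of_set {0..1}) X) (powertop_real UNIV) snd"
      using continuous_map_into_fulltopology[OF continuous_map_snd[of "top_of_set {0..1}" "subtopology (powertop_real UNIV) (geom_real K)"]]
      unfolding X_def geom_real_top_def .
    have cH: "continuous_map (prod_topology (top_of_set {0..1}) X) (powertop_real UNIV) H"
      unfolding continuous_map_componentwise_UNIV
    proof
      fix v
      have a: "continuous_map (prod_topology (top_of_set {0..1}) X) euclideanreal (\<lambda>p. snd p v)"
        using continuous_map_compose[OF csnd continuous_map_product_projection[of v UNIV "\<lambda>_. euclideanreal"]]
        by (simp add: o_def)
      have b: "continuous_map (prod_topology (top_of_set {0..1}) X) euclideanreal (\<lambda>p. gm r d (sm r d (snd p)) v)"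
        using continuous_map_compose[OF continuous_map_compose[OF continuous_map_snd cgs] continuous_map_product_projection[of v UNIV "\<lambda>_. euclideanreal"]]
        by (simp add: o_def)
      show "continuous_map (prod_topology (top_of_set {0..1}) X) euclideanreal (\<lambda>p. H p v)"
        unfolding H_def using a b cfst by (intro continuous_intros) auto
    qed
    have inX: "H p \<in> geom_real K" if p: "p \<in> topspace (prod_topology (top_of_set {0..1}) X)" for p
    proof -
      obtain t f where tf: "p = (t, f)" "0 \<le> t" "t \<le> 1" "f \<in> geom_real K" using p tX by (cases p) auto
      have g: "gm r d (sm r d f) \<in> geom_real K" using gm_in[OF d1 sm_in[OF d1]] tf(4) K_def by simp
      have F: "(\<forall>i. 0 \<le> f i) \<and> (\<forall>i. i \<notin> {1..(r+1)*d} \<longrightarrow> f i = 0) \<and> sum f {1..(r+1)*d} = 1 \<and> (\<exists>j\<le>r. \<forall>v\<in>Acl r d j. f v = 0)"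
        using tf(4) mem_geom[OF d1] K_def by blast
      have G: "(\<forall>i. 0 \<le> gm r d (sm r d f) i) \<and> (\<forall>i. i \<notin> {1..(r+1)*d} \<longrightarrow> gm r d (sm r d f) i = 0) \<and> sum (gm r d (sm r d f)) {1..(r+1)*d} = 1"
        using g mem_geom[OF d1] K_def by blast
      obtain j where j: "j \<le> r" "\<forall>v\<in>Acl r d j. f v = 0" using F by blast
      have smj: "sm r d f j = 0" using j by (simp add: sm_def)
      have gj: "\<forall>v\<in>Acl r d j. gm r d (sm r d f) v = 0" using smj by (auto simp: gm_def Acl_def)
      have "sum (H p) {1..(r+1)*d} = t * sum f {1..(r+1)*d} + (1-t) * sum (gm r d (sm r d f)) {1..(r+1)*d}"
        by (simp add: H_def tf(1) sum.distrib sum_distrib_left)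
      also have "\<dots> = 1" using F G by simp
      finally have s: "sum (H p) {1..(r+1)*d} = 1" .
      have "\<forall>i. 0 \<le> H p i" using F G tf by (auto simp: H_def intro!: add_nonneg_nonneg mult_nonneg_nonneg)
      moreover have "\<forall>i. i \<notin> {1..(r+1)*d} \<longrightarrow> H p i = 0" using F G tf by (simp add: H_def)
      moreover have "\<forall>v\<in>Acl r d j. H p v = 0" using j gj tf by (simp add: H_def)
      ultimately show ?thesis unfolding K_def mem_geom[OF d1] using s j(1) by blast
    qed
    show "continuous_map (prod_topology (top_of_set {0..1}) X) X H"
      unfolding X_def geom_real_top_def continuous_map_in_subtopology
      using cH inX by (auto simp: X_def geom_real_top_def)
  qed
  show ?thesis unfolding homotopy_equivalent_space_def K_def[symmetric] X_def[symmetric] Y_def[symmetric]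
    using c1 c2 h1 h2 by blast
qed




fun mx :: "(nat \<Rightarrow> real) \<Rightarrow> nat \<Rightarrow> real" where
  "mx w 0 = - w 0"
| "mx w (Suc k) = max (mx w k) (- w (Suc k))"

lemma mx_ge: "i \<le> k \<Longrightarrow> - w i \<le> mx w k"
  by (induction k) (auto simp: le_Suc_eq max.coboundedI1)

lemma mx_attained: "\<exists>i\<le>k. mx w k = - w i"
  by (induction k) (auto simp: max_def le_Suc_eq)

lemma mx_unique:
  assumes "\<forall>i\<le>k. - w i \<le> M" "\<exists>i\<le>k. - w i = M"
  shows "mx w k = M"
proof -
  obtain i where i: "i \<le> k" "mx w k = - w i" using mx_attained by blast
  obtain i' where i': "i' \<le> k" "- w i' = M" using assms by blast
  have "mx w k \<le> M" using i assms(1) by auto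
  moreover have "M \<le> mx w k" using i' mx_ge by metis
  ultimately show ?thesis by simp
qed

lemma mx_cont:
  assumes "\<And>i. continuous_map X euclideanreal (\<lambda>x. F x i)"
  shows "continuous_map X euclideanreal (\<lambda>x. mx (F x) k)"
  by (induction k) (auto intro!: continuous_intros assms)

definition cc :: "nat \<Rightarrow> real" where "cc r = 1 / (real r + 1)"

definition Nf :: "nat \<Rightarrow> (nat \<Rightarrow> real) \<Rightarrow> real" where
  "Nf r x = sqrt (\<Sum>i<r. (x i - cc r)^2)"

definition phi :: "nat \<Rightarrow> (nat \<Rightarrow> real) \<Rightarrow> nat \<Rightarrow> real" where
  "phi r x = (\<lambda>i. if i < r then (x i - cc r) / Nf r x else 0)"

definition wv :: "nat \<Rightarrow> (nat \<Rightarrow> real) \<Rightarrow> nat \<Rightarrow> real" where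
  "wv r u = (\<lambda>i. if i < r then u i else if i = r then - (\<Sum>k<r. u k) else 0)"

definition psi :: "nat \<Rightarrow> (nat \<Rightarrow> real) \<Rightarrow> nat \<Rightarrow> real" where
  "psi r u = (\<lambda>i. if i \<le> r then cc r + wv r u i / ((real r + 1) * mx (wv r u) r) else 0)"

definition Sset :: "nat \<Rightarrow> (nat \<Rightarrow> real) set" where
  "Sset r = {x. (\<Sum>i<r. x i ^ 2) = 1 \<and> (\<forall>i\<ge>r. x i = 0)}"

lemma nsphere_Sset:
  assumes "r \<ge> 1"
  shows "nsphere (r - 1) = subtopology (powertop_real UNIV) (Sset r)"
proof -
  have "{..r-1} = {..<r}" using assms by auto
  moreover have "(\<forall>i>r-1. x i = 0) \<longleftrightarrow> (\<forall>i\<ge>r. x i = 0)" for x :: "nat \<Rightarrow> real"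
    using assms by (auto; metis Suc_le_eq Suc_pred' less_le_trans zero_less_one)
  ultimately show ?thesis unfolding nsphere Sset_def by simp
qed

lemma sum_le_r: "(\<Sum>i\<le>r. f i) = (\<Sum>i<r. f i) + f r" for f :: "nat \<Rightarrow> real"
  by (simp add: lessThan_Suc_atMost[symmetric])

lemma cc_mult: "(real r + 1) * cc r = 1" by (simp add: cc_def)
lemma cc_pos: "cc r > 0" by (simp add: cc_def)

lemma Nf_pos:
  assumes x: "x \<in> Bset r"
  shows "Nf r x > 0"
proof -
  have x0: "\<forall>i. 0 \<le> x i" "sum x {..r} = 1" "\<exists>j\<le>r. x j = 0" using x by (auto simp: Bset_def)
  have "\<exists>i<r. x i \<noteq> cc r"
  proof (rule ccontr)
    assume "\<not> ?thesis"
    then have all: "\<forall>i<r. x i = cc r" by auto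
    then have "(\<Sum>i<r. x i) = real r * cc r" by simp
    then have "x r = cc r" using x0(2) sum_le_r[of x r] cc_mult[of r] by (simp add: algebra_simps)
    then have "\<forall>i\<le>r. x i = cc r" using all by (metis le_neq_implies_less)
    then show False using x0(3) cc_pos[of r] by force
  qed
  then obtain i where i: "i < r" "x i \<noteq> cc r" by blast
  have "0 < (x i - cc r)^2" using i by simp
  also have "\<dots> \<le> (\<Sum>i<r. (x i - cc r)^2)" using i by (intro member_le_sum) auto
  finally show ?thesis unfolding Nf_def by simp
qed

lemma wv_sum: "(\<Sum>i\<le>r. wv r u i) = 0"
  by (simp add: sum_le_r wv_def)

lemma mx_pos:
  assumes u: "u \<in> Sset r"
  shows "mx (wv r u) r > 0"
proof (rule ccontr)
  assume "\<not> ?thesis"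
  then have "\<forall>i\<le>r. 0 \<le> wv r u i" using mx_ge[of _ r "wv r u"] by force
  then have "\<forall>i\<in>{..r}. wv r u i = 0" using wv_sum[of r u] sum_nonneg_eq_0_iff[of "{..r}" "wv r u"] by auto
  then have "\<forall>i<r. u i = 0" by (metis (no_types, lifting) atMost_iff less_imp_le_nat wv_def)
  then have "(\<Sum>i<r. u i ^ 2) = 0" by simp
  then show False using u by (simp add: Sset_def)
qed

lemma phi_in:
  assumes x: "x \<in> Bset r"
  shows "phi r x \<in> Sset r"
proof -
  have N: "Nf r x > 0" using Nf_pos[OF x] .
  have N2: "(Nf r x)^2 = (\<Sum>i<r. (x i - cc r)^2)" unfolding Nf_def
    by (simp add: sum_nonneg)
  have "(\<Sum>i<r. phi r x i ^ 2) = (\<Sum>i<r. (x i - cc r)^2 / (Nf r x)^2)"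
    by (simp add: phi_def power_divide)
  also have "\<dots> = (\<Sum>i<r. (x i - cc r)^2) / (Nf r x)^2" by (simp add: sum_divide_distrib)
  also have "\<dots> = 1" using N by (simp add: N2[symmetric])
  finally show ?thesis by (simp add: Sset_def phi_def)
qed

lemma psi_in:
  assumes u: "u \<in> Sset r"
  shows "psi r u \<in> Bset r"
proof -
  define M where "M = mx (wv r u) r"
  have M: "M > 0" using mx_pos[OF u] M_def by simp
  have D: "(real r + 1) * M > 0" using M by simp
  have nn: "0 \<le> psi r u i" for i
  proof (cases "i \<le> r")
    case True
    have "- wv r u i \<le> M" using mx_ge[OF True] M_def by simp
    then have "- wv r u i / ((real r + 1) * M) \<le> M / ((real r + 1) * M)"
      using D by (intro divide_right_mono) auto
    also have "\<dots> = cc r" using M by (simp add: cc_def)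
    finally show ?thesis using True by (simp add: psi_def M_def[symmetric])
  next
    case False then show ?thesis by (simp add: psi_def)
  qed
  have "(\<Sum>i\<le>r. psi r u i) = (\<Sum>i\<le>r. cc r + wv r u i / ((real r + 1) * M))"
    by (simp add: psi_def M_def)
  also have "\<dots> = (real r + 1) * cc r + (\<Sum>i\<le>r. wv r u i) / ((real r + 1) * M)"
    by (simp add: sum.distrib sum_divide_distrib)
  also have "\<dots> = 1" using cc_mult[of r] wv_sum[of r u] by simp
  finally have s: "(\<Sum>i\<le>r. psi r u i) = 1" .
  obtain i where i: "i \<le> r" "M = - wv r u i" using mx_attained M_def by blast
  have "psi r u i = cc r + wv r u i / ((real r + 1) * M)" using i by (simp add: psi_def M_def)
  also have "\<dots> = cc r - M / ((real r + 1) * M)" using i by simp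
  also have "\<dots> = 0" using M by (simp add: cc_def)
  finally have z: "psi r u i = 0" .
  show ?thesis unfolding Bset_def using nn s z i(1) by (auto simp: psi_def)
qed


lemma psi_phi:
  assumes x: "x \<in> Bset r"
  shows "psi r (phi r x) = x"
proof
  fix i
  define N where "N = Nf r x"
  have N: "N > 0" using Nf_pos[OF x] N_def by simp
  have x0: "\<forall>i. 0 \<le> x i" "\<forall>i>r. x i = 0" "sum x {..r} = 1" "\<exists>j\<le>r. x j = 0" using x by (auto simp: Bset_def)
  have sy: "(\<Sum>k<r. x k - cc r) + (x r - cc r) = 0"
  proof -
    have "(\<Sum>k<r. x k - cc r) + (x r - cc r) = (\<Sum>k\<le>r. x k - cc r)" by (rule sum_le_r[symmetric])
    also have "\<dots> = sum x {..r} - (real r + 1) * cc r" by (simp add: sum_subtractf)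
    also have "\<dots> = 0" using x0(3) cc_mult[of r] by simp
    finally show ?thesis .
  qed
  have W: "wv r (phi r x) k = (x k - cc r) / N" if "k \<le> r" for k
  proof (cases "k < r")
    case True then show ?thesis by (simp add: wv_def phi_def N_def)
  next
    case False
    then have k: "k = r" using that by simp
    have "wv r (phi r x) k = - (\<Sum>j<r. (x j - cc r) / N)" using k by (simp add: wv_def phi_def N_def)
    also have "\<dots> = - (\<Sum>j<r. x j - cc r) / N" by (simp add: sum_divide_distrib)
    also have "\<dots> = (x r - cc r) / N"
    proof -
      have "(\<Sum>j<r. x j - cc r) = -(x r - cc r)" using sy by linarith
      then show ?thesis by simp
    qed
    finally show ?thesis using k by simp
  qed
  have Mx: "mx (wv r (phi r x)) r = cc r / N"
  proof (rule mx_unique)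
    show "\<forall>i\<le>r. - wv r (phi r x) i \<le> cc r / N"
    proof (intro allI impI)
      fix i assume "i \<le> r"
      then have "- wv r (phi r x) i = (cc r - x i) / N" using W[OF \<open>i \<le> r\<close>] by (metis minus_diff_eq minus_divide_left)
      also have "\<dots> \<le> cc r / N" using N x0(1) by (intro divide_right_mono) auto
      finally show "- wv r (phi r x) i \<le> cc r / N" .
    qed
    obtain j where j: "j \<le> r" "x j = 0" using x0(4) by blast
    have "- wv r (phi r x) j = cc r / N" using W[OF j(1)] j(2) by simp
    then show "\<exists>i\<le>r. - wv r (phi r x) i = cc r / N" using j(1) by blast
  qed
  show "psi r (phi r x) i = x i"
  proof (cases "i \<le> r")
    case True
    have "psi r (phi r x) i = cc r + ((x i - cc r) / N) / ((real r + 1) * (cc r / N))"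
      using True W[OF True] Mx by (simp add: psi_def)
    also have "\<dots> = cc r + (x i - cc r)"
    proof -
      have "(real r + 1) * (cc r / N) = 1 / N" using cc_mult[of r] by (metis times_divide_eq_right)
      then show ?thesis using N by simp
    qed
    finally show ?thesis by simp
  next
    case False then show ?thesis using x0(2) by (simp add: psi_def)
  qed
qed


lemma phi_psi:
  assumes u: "u \<in> Sset r"
  shows "phi r (psi r u) = u"
proof
  fix i
  define M where "M = mx (wv r u) r"
  have M: "M > 0" using mx_pos[OF u] M_def by simp
  define l where "l = 1 / ((real r + 1) * M)"
  have l: "l > 0" using M l_def by simp
  have u0: "(\<Sum>i<r. u i ^ 2) = 1" "\<forall>i\<ge>r. u i = 0" using u by (auto simp: Sset_def)
  have P: "psi r u k - cc r = l * u k" if "k < r" for k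
    using that by (simp add: psi_def wv_def l_def M_def)
  have "Nf r (psi r u) = sqrt (\<Sum>k<r. (l * u k)^2)" unfolding Nf_def using P by simp
  also have "\<dots> = sqrt (l^2 * (\<Sum>k<r. u k ^ 2))" by (simp add: power_mult_distrib sum_distrib_left)
  also have "\<dots> = l" using u0(1) l by simp
  finally have NN: "Nf r (psi r u) = l" .
  show "phi r (psi r u) i = u i"
  proof (cases "i < r")
    case True then show ?thesis using P[OF True] NN l by (simp add: phi_def)
  next
    case False then show ?thesis using u0(2) by (simp add: phi_def)
  qed
qed





lemma cont_wv: "continuous_map (subtopology (powertop_real UNIV) S) euclideanreal (\<lambda>u. wv r u i)"
proof -
  consider "i < r" | "i = r" | "i > r" by linarith
  then show ?thesis
  proof cases
    case 1
    then have eq: "(\<lambda>u. wv r u i) = (\<lambda>u. u i)" by (auto simp: wv_def)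
    show ?thesis unfolding eq by (rule cont_proj_sub)
  next
    case 2
    then have eq: "(\<lambda>u. wv r u i) = (\<lambda>u. - (\<Sum>k<r. u k))" by (auto simp: wv_def)
    show ?thesis unfolding eq by (intro continuous_intros cont_proj_sub) auto
  next
    case 3
    then have eq: "(\<lambda>u. wv r u i) = (\<lambda>u. 0)" by (auto simp: wv_def)
    show ?thesis unfolding eq by simp
  qed
qed

lemma cont_phi: "continuous_map (subtopology (powertop_real UNIV) (Bset r)) (subtopology (powertop_real UNIV) (Sset r)) (phi r)"
  unfolding continuous_map_in_subtopology
proof
  show "continuous_map (subtopology (powertop_real UNIV) (Bset r)) (powertop_real UNIV) (phi r)"
    unfolding continuous_map_componentwise_UNIV
  proof
    fix k
    show "continuous_map (subtopology (powertop_real UNIV) (Bset r)) euclideanreal (\<lambda>x. phi r x k)"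
    proof (cases "k < r")
      case True
      then have eq: "(\<lambda>x. phi r x k) = (\<lambda>x. (x k - cc r) / Nf r x)" by (auto simp: phi_def)
      have cN: "continuous_map (subtopology (powertop_real UNIV) (Bset r)) euclideanreal (Nf r)"
        unfolding Nf_def by (intro continuous_intros cont_proj_sub) auto
      show ?thesis unfolding eq
        by (rule continuous_map_real_divide) (auto intro!: continuous_intros cont_proj_sub cN dest: Nf_pos)
    next
      case False
      then have eq: "(\<lambda>x. phi r x k) = (\<lambda>x. 0)" by (auto simp: phi_def)
      show ?thesis unfolding eq by simp
    qed
  qed
  show "phi r \<in> topspace (subtopology (powertop_real UNIV) (Bset r)) \<rightarrow> Sset r"
    using phi_in by auto
qed

lemma cont_psi: "continuous_map (subtopology (powertop_real UNIV) (Sset r)) (subtopology (powertop_real UNIV) (Bset r)) (psi r)"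
  unfolding continuous_map_in_subtopology
proof
  show "continuous_map (subtopology (powertop_real UNIV) (Sset r)) (powertop_real UNIV) (psi r)"
    unfolding continuous_map_componentwise_UNIV
  proof
    fix k
    show "continuous_map (subtopology (powertop_real UNIV) (Sset r)) euclideanreal (\<lambda>x. psi r x k)"
    proof (cases "k \<le> r")
      case True
      then have eq: "(\<lambda>x. psi r x k) = (\<lambda>u. cc r + wv r u k / ((real r + 1) * mx (wv r u) r))" by (auto simp: psi_def)
      have cM: "continuous_map (subtopology (powertop_real UNIV) (Sset r)) euclideanreal (\<lambda>u. mx (wv r u) r)"
        by (rule mx_cont) (rule cont_wv)
      have cD: "continuous_map (subtopology (powertop_real UNIV) (Sset r)) euclideanreal (\<lambda>u. wv r u k / ((real r + 1) * mx (wv r u) r))"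
        by (rule continuous_map_real_divide) (auto intro!: continuous_intros cont_wv cM dest: mx_pos)
      show ?thesis unfolding eq by (rule continuous_map_add[OF _ cD]) simp
    next
      case False
      then have eq: "(\<lambda>x. psi r x k) = (\<lambda>x. 0)" by (auto simp: psi_def)
      show ?thesis unfolding eq by simp
    qed
  qed
  show "psi r \<in> topspace (subtopology (powertop_real UNIV) (Sset r)) \<rightarrow> Bset r"
    using psi_in by auto
qed

lemma B_S: "subtopology (powertop_real UNIV) (Bset r) homeomorphic_space subtopology (powertop_real UNIV) (Sset r)"
  unfolding homeomorphic_space_def homeomorphic_maps_def
  using cont_phi cont_psi psi_phi phi_psi by fastforce

theorem mainTheorem11:
  fixes r d :: nat
  assumes "r \<ge> 1" and "d \<ge> 1" and "(r + 1) * d \<ge> 3"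
  shows "geom_real_top (Delta_t d {1..(r+1)*d} (cycpow_edge ((r+1)*d) r))
           homotopy_equivalent_space nsphere (r - 1)"
  unfolding nsphere_Sset[OF assms(1)]
  using X_B[OF assms(2)] homeomorphic_imp_homotopy_equivalent_space[OF B_S]
  by (rule homotopy_eqv_trans)


end
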